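(* Let $C_0(h)=\frac{m^1h^{-\kappa-1}\big(h+\frac{f(I)}{\delta}\big)}{(1-\alpha)\delta}e^{\delta\kappa T}+1$ and $c_1=\frac12\big(\frac{\alpha\theta}{1-\alpha}\big)^2+\frac{\alpha}{1-\alpha}\big(r+\frac12\theta^2\big)>0$. Then $$0\le W_h(t,z,h)\le z^{\frac{\alpha}{\alpha-1}}(1-\alpha)\alpha^{\frac{\alpha}{1-\alpha}}C_0(h)\frac{e^{c_1T}}{c_1}\quad\text{for all }(t,z,h)\in\mathcal{O}.$$ Moreover, $\lim_{z\to\infty}W_h(t,z,h)=0$ and $\lim_{z\to0}W_h(t,z,h)=\infty$ for $(t,h)\in[0,T)\times\mathbb{R}_+$.
   Context: Fix constants $T>0$, $r>0$, $\mu\in\mathbb{R}$, $\sigma>0$, $\rho>0$, $m^0\ge 0$, $m^1\ge 0$, $\kappa>0$, $\delta>0$, $\alpha\in(0,1)$, $I>0$ and a number $f(I)>0$. Write $\mathbb{R}_+=(0,\infty)$, $\mathcal{O}=[0,T]\times\mathbb{R}_+^2$, $\theta=(\mu-r)/\sigma$. Let $B$ be a standard Brownian motion. Let $\widehat u(z,h)=(1-\alpha)(z/\alpha)^{\alpha/(\alpha-1)}h$. For $(t,z,h)\in\mathcal{O}$ and $s\in[t,T]$ let $H^2_s=he^{-\delta(s-t)}+\frac{f(I)}{\delta}(1-e^{-\delta(s-t)})$, $M^{H^2}_s=m^0+m^1(H^2_s)^{-\kappa}$, and let $Z^2$ solve $dZ^2_s=(\rho-r+M^{H^2}_s)Z^2_s\,ds-\theta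 Z^2_s\,dB_s$, $Z^2_t=z$. Define $W(t,z,h)=\mathbb{E}\big[\int_t^T e^{-\int_t^s(\rho+M^{H^2}_u)du}\,\widehat u(Z^2_s,H^2_s)\,ds\big]$, and let $W_h$ be its partial derivative in $h$. *)

theory Defs
  imports "HOL-Probability.Probability"
begin

definition std_BM :: "'a measure \<Rightarrow> (real \<Rightarrow> 'a \<Rightarrow> real) \<Rightarrow> bool" where
  "std_BM M B \<longleftrightarrow> prob_space M
     \<and> (\<forall>s. B s \<in> borel_measurable M)
     \<and> (\<forall>\<omega>\<in>space M. B 0 \<omega> = 0)
     \<and> (\<forall>\<omega>\<in>space M. continuous_on {0..} (\<lambda>s. B s \<omega>))
     \<and> (\<forall>t s. 0 \<le> t \<and> t < s \<longrightarrow>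
          distributed M lborel (\<lambda>\<omega>. B s \<omega> - B t \<omega>)
            (\<lambda>x. ennreal (normal_density 0 (sqrt (s - t)) x)))
     \<and> (\<forall>(ts::nat \<Rightarrow> real) n. 0 \<le> ts 0 \<and> (\<forall>i<n. ts i \<le> ts (Suc i)) \<longrightarrow>
          prob_space.indep_vars M (\<lambda>_. borel) (\<lambda>i \<omega>. B (ts (Suc i)) \<omega> - B (ts i) \<omega>) {..<n})"

definition u_hat :: "real \<Rightarrow> real \<Rightarrow> real \<Rightarrow> real" where
  "u_hat \<alpha> z h = (1 - \<alpha>) * (z / \<alpha>) powr (\<alpha> / (\<alpha> - 1)) * h"

definition H2 :: "real \<Rightarrow> real \<Rightarrow> real \<Rightarrow> real \<Rightarrow> real \<Rightarrow> real" where
  "H2 \<delta> fI t h s = h * exp (- \<delta> * (s - t)) + fI / \<delta> * (1 - exp (- \<delta> * (s - t)))"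

definition MH2 :: "real \<Rightarrow> real \<Rightarrow> real \<Rightarrow> real \<Rightarrow> real \<Rightarrow> real \<Rightarrow> real \<Rightarrow> real \<Rightarrow> real" where
  "MH2 m0 m1 \<kappa> \<delta> fI t h s = m0 + m1 * (H2 \<delta> fI t h s) powr (- \<kappa>)"

text \<open>\<open>Z^2_s\<close>: the (unique strong) solution of the linear SDE
  \<open>dZ = (\<rho> - r + M_s) Z ds - \<theta> Z dB_s\<close>, \<open>Z_t = z\<close>, written explicitly.\<close>
definition Z2 :: "(real \<Rightarrow> 'a \<Rightarrow> real) \<Rightarrow> real \<Rightarrow> real \<Rightarrow> real \<Rightarrow> real \<Rightarrow> real \<Rightarrow> real
                 \<Rightarrow> real \<Rightarrow> real \<Rightarrow> real \<Rightarrow> real \<Rightarrow> real \<Rightarrow> real \<Rightarrow> 'a \<Rightarrow> real" where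
  "Z2 B r \<rho> \<theta> m0 m1 \<kappa> \<delta> fI t z h s \<omega> =
     z * exp ((\<rho> - r) * (s - t) + (LINT u:{t..s}|lborel. MH2 m0 m1 \<kappa> \<delta> fI t h u)
              - \<theta>\<^sup>2 / 2 * (s - t) - \<theta> * (B s \<omega> - B t \<omega>))"

definition W :: "'a measure \<Rightarrow> (real \<Rightarrow> 'a \<Rightarrow> real) \<Rightarrow> real \<Rightarrow> real \<Rightarrow> real \<Rightarrow> real \<Rightarrow> real
                 \<Rightarrow> real \<Rightarrow> real \<Rightarrow> real \<Rightarrow> real \<Rightarrow> real \<Rightarrow> real \<Rightarrow> real \<Rightarrow> real \<Rightarrow> real" where
  "W M B T r \<rho> \<theta> m0 m1 \<kappa> \<delta> \<alpha> fI t z h =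
     (\<integral>\<omega>. (LINT s:{t..T}|lborel.
          exp (- (LINT u:{t..s}|lborel. \<rho> + MH2 m0 m1 \<kappa> \<delta> fI t h u))
          * u_hat \<alpha> (Z2 B r \<rho> \<theta> m0 m1 \<kappa> \<delta> fI t z h s \<omega>) (H2 \<delta> fI t h s)) \<partial>M)"

end

theory Submission
  imports Defs
begin


lemma floor_approx_lim:
  fixes y :: real
  shows "(\<lambda>n. real_of_int \<lfloor>real (Suc n) * y\<rfloor> / real (Suc n)) \<longlonglongrightarrow> y"
proof (rule tendsto_sandwich[where f="\<lambda>n. y - 1 / real (Suc n)" and h="\<lambda>n. y"])
  show "\<forall>\<^sub>F n in sequentially. y - 1 / real (Suc n) \<le> real_of_int \<lfloor>real (Suc n) * y\<rfloor> / real (Suc n)"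
  proof (intro always_eventually allI)
    fix n
    have "real (Suc n) * y - 1 \<le> real_of_int \<lfloor>real (Suc n) * y\<rfloor>" by linarith
    then have "(real (Suc n) * y - 1) / real (Suc n) \<le> real_of_int \<lfloor>real (Suc n) * y\<rfloor> / real (Suc n)"
      by (rule divide_right_mono) simp
    moreover have "(real (Suc n) * y - 1) / real (Suc n) = y - 1 / real (Suc n)"
      by (simp add: diff_divide_distrib)
    ultimately show "y - 1 / real (Suc n) \<le> real_of_int \<lfloor>real (Suc n) * y\<rfloor> / real (Suc n)"
      by simp
  qed
  show "\<forall>\<^sub>F n in sequentially. real_of_int \<lfloor>real (Suc n) * y\<rfloor> / real (Suc n) \<le> y"
  proof (intro always_eventually allI)
    fix n
    have "real_of_int \<lfloor>real (Suc n) * y\<rfloor> \<le> real (Suc n) * y" by linarith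
    then show "real_of_int \<lfloor>real (Suc n) * y\<rfloor> / real (Suc n) \<le> y"
      by (simp add: field_simps)
  qed
  have "(\<lambda>n. 1 / real (Suc n)) \<longlonglongrightarrow> 0" using LIMSEQ_inverse_real_of_nat
    by (simp add: inverse_eq_divide)
  then show "(\<lambda>n. y - 1 / real (Suc n)) \<longlonglongrightarrow> y"
    using tendsto_diff[OF tendsto_const, of _ 0 sequentially y] by simp
qed simp

lemma joint_meas:
  fixes B :: "real \<Rightarrow> 'a \<Rightarrow> real" and cl :: "real \<Rightarrow> real"
  assumes Bm: "\<And>s. B s \<in> borel_measurable M"
    and cont: "\<And>\<omega>. \<omega> \<in> space M \<Longrightarrow> continuous_on {0..} (\<lambda>s. B s \<omega>)"
    and clm: "cl \<in> borel_measurable borel" and clnn: "\<And>s. 0 \<le> cl s"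
  shows "(\<lambda>(\<omega>, s). B (cl s) \<omega>) \<in> borel_measurable (M \<Otimes>\<^sub>M lborel)"
proof (rule borel_measurable_LIMSEQ_real[where u="\<lambda>n (\<omega>, s). B (real_of_int \<lfloor>real (Suc n) * cl s\<rfloor> / real (Suc n)) \<omega>"])
  fix x :: "'a \<times> real" assume x: "x \<in> space (M \<Otimes>\<^sub>M lborel)"
  obtain \<omega> and s :: real where xe: "x = (\<omega>, s)" by (cases x)
  with x have \<omega>: "\<omega> \<in> space M" by (simp add: space_pair_measure)
  have nn: "0 \<le> real_of_int \<lfloor>real (Suc n) * cl s\<rfloor> / real (Suc n)" for n
    using clnn[of s] by simp
  have "(\<lambda>n. B (real_of_int \<lfloor>real (Suc n) * cl s\<rfloor> / real (Suc n)) \<omega>) \<longlonglongrightarrow> B (cl s) \<omega>"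
    by (rule continuous_on_tendsto_compose[OF cont[OF \<omega>] floor_approx_lim])
       (use clnn nn in auto)
  then show "(\<lambda>n. (\<lambda>(\<omega>, s). B (real_of_int \<lfloor>real (Suc n) * cl s\<rfloor> / real (Suc n)) \<omega>) x) \<longlonglongrightarrow> (\<lambda>(\<omega>, s). B (cl s) \<omega>) x"
    by (simp add: xe)
next
  fix n
  let ?g = "\<lambda>(\<omega>::'a, s). \<lfloor>real (Suc n) * cl s\<rfloor>"
  have gm: "?g \<in> measurable (M \<Otimes>\<^sub>M lborel) (count_space UNIV)"
  proof -
    have "(\<lambda>s. real (Suc n) * cl s) \<in> borel_measurable lborel" using clm by simp
    then have "(\<lambda>s. \<lfloor>real (Suc n) * cl s\<rfloor>) \<in> measurable lborel (count_space UNIV)"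
      using measurable_compose[OF _ measurable_real_floor] by blast
    then have "(\<lambda>x. \<lfloor>real (Suc n) * cl (snd x)\<rfloor>) \<in> measurable (M \<Otimes>\<^sub>M lborel) (count_space UNIV)"
      using measurable_compose[OF measurable_snd] by blast
    then show ?thesis by (simp add: case_prod_beta)
  qed
  have "(\<lambda>x. (\<lambda>i (\<omega>, s). B (real_of_int i / real (Suc n)) \<omega>) (?g x) x) \<in> borel_measurable (M \<Otimes>\<^sub>M lborel)"
  proof (rule measurable_compose_countable'[OF _ gm])
    fix i :: int
    have "(\<lambda>x. B (real_of_int i / real (Suc n)) (fst x)) \<in> borel_measurable (M \<Otimes>\<^sub>M lborel)"
      using measurable_compose[OF measurable_fst Bm] by blast
    then show "(\<lambda>(\<omega>, s). B (real_of_int i / real (Suc n)) \<omega>) \<in> borel_measurable (M \<Otimes>\<^sub>M lborel)"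
      unfolding split_def by simp
  qed simp
  then show "(\<lambda>(\<omega>, s). B (real_of_int \<lfloor>real (Suc n) * cl s\<rfloor> / real (Suc n)) \<omega>) \<in> borel_measurable (M \<Otimes>\<^sub>M lborel)"
    by (simp add: case_prod_beta)
qed




lemma nd_shift:
  assumes "\<sigma> > 0"
  shows "normal_density 0 \<sigma> x * exp (l * x) = exp (l^2 * \<sigma>^2 / 2) * normal_density (l * \<sigma>^2) \<sigma> x"
proof -
  have "-(x - 0)\<^sup>2 / (2 * \<sigma>\<^sup>2) + l * x = l^2 * \<sigma>^2 / 2 + (-(x - l * \<sigma>^2)\<^sup>2 / (2 * \<sigma>\<^sup>2))"
    using assms by (simp add: field_simps power2_eq_square)
  then have "exp (-(x - 0)\<^sup>2 / (2 * \<sigma>\<^sup>2)) * exp (l * x) = exp (l^2 * \<sigma>^2 / 2) * exp (-(x - l * \<sigma>^2)\<^sup>2 / (2 * \<sigma>\<^sup>2))"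
    by (simp add: exp_add[symmetric])
  then show ?thesis unfolding normal_density_def by (simp add: ac_simps)
qed

lemma gauss_mgf:
  assumes BM: "std_BM M B" and t: "0 \<le> t" "t \<le> s"
  shows "(\<integral>\<^sup>+\<omega>. ennreal (exp (l * (B s \<omega> - B t \<omega>))) \<partial>M) = ennreal (exp (l^2 * (s - t) / 2))"
proof (cases "s = t")
  case True
  have ps: "prob_space M" using BM by (simp add: std_BM_def)
  have "(\<integral>\<^sup>+\<omega>. ennreal (exp (l * (B s \<omega> - B t \<omega>))) \<partial>M) = (\<integral>\<^sup>+\<omega>. 1 \<partial>M)"
    using True by simp
  also have "\<dots> = 1" using prob_space.emeasure_space_1[OF ps] by simp
  finally show ?thesis using True by simp
next
  case False
  then have st: "t < s" using t by simp
  define \<sigma> where "\<sigma> = sqrt (s - t)"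
  have \<sigma>: "\<sigma> > 0" "\<sigma>^2 = s - t" using st by (auto simp: \<sigma>_def)
  have D: "distributed M lborel (\<lambda>\<omega>. B s \<omega> - B t \<omega>) (\<lambda>x. ennreal (normal_density 0 \<sigma> x))"
    using BM t st unfolding std_BM_def \<sigma>_def by blast
  have "(\<integral>\<^sup>+\<omega>. ennreal (exp (l * (B s \<omega> - B t \<omega>))) \<partial>M)
      = (\<integral>\<^sup>+x. ennreal (normal_density 0 \<sigma> x) * ennreal (exp (l * x)) \<partial>lborel)"
    by (rule distributed_nn_integral[OF D, symmetric]) simp
  also have "\<dots> = (\<integral>\<^sup>+x. ennreal (exp (l^2 * \<sigma>^2 / 2)) * ennreal (normal_density (l * \<sigma>^2) \<sigma> x) \<partial>lborel)"
    by (intro nn_integral_cong) (simp add: ennreal_mult'[symmetric] nd_shift[OF \<sigma>(1)])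
  also have "\<dots> = ennreal (exp (l^2 * \<sigma>^2 / 2)) * (\<integral>\<^sup>+x. ennreal (normal_density (l * \<sigma>^2) \<sigma> x) \<partial>lborel)"
    by (rule nn_integral_cmult) simp
  also have "(\<integral>\<^sup>+x. ennreal (normal_density (l * \<sigma>^2) \<sigma> x) \<partial>lborel) = 1"
    using \<sigma>(1) by (subst nn_integral_eq_integral) (auto simp: integrable_normal_density integral_normal_density)
  finally show ?thesis using \<sigma> by simp
qed




lemma BM_expect:
  fixes M :: "'a measure" and B :: "real \<Rightarrow> 'a \<Rightarrow> real"
  assumes BM: "std_BM M B" and t: "0 \<le> t" "t \<le> T" and g: "continuous_on {t..T} g"
    and gnn: "\<And>s. s \<in> {t..T} \<Longrightarrow> 0 \<le> g s"
  shows "(\<integral>\<omega>. (LINT s:{t..T}|lborel. g s * exp (l * (B s \<omega> - B t \<omega>))) \<partial>M)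
         = (LINT s:{t..T}|lborel. g s * exp (l^2 * (s - t) / 2))"
proof -
  have ps: "prob_space M" using BM by (simp add: std_BM_def)
  interpret ps: prob_space M by (rule ps)
  interpret P: pair_sigma_finite M lborel
    by (simp add: pair_sigma_finite_def ps.sigma_finite_measure_axioms lborel.sigma_finite_measure_axioms)
  have Bm[measurable]: "\<And>s. B s \<in> borel_measurable M" using BM by (simp add: std_BM_def)
  have cont: "\<And>\<omega>. \<omega> \<in> space M \<Longrightarrow> continuous_on {0..} (\<lambda>s. B s \<omega>)" using BM by (simp add: std_BM_def)
  define A where "A = {t..T}"
  define cl where "cl s = min T (max t s)" for s
  have clc: "continuous_on UNIV cl" unfolding cl_def by (intro continuous_intros)
  have clm: "cl \<in> borel_measurable borel" by (rule borel_measurable_continuous_onI[OF clc])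
  have clA: "cl s \<in> {t..T}" for s using t by (auto simp: cl_def)
  have clid: "s \<in> {t..T} \<Longrightarrow> cl s = s" for s by (auto simp: cl_def)
  have clnn: "0 \<le> cl s" for s using clA[of s] t by auto
  define gc where "gc s = g (cl s)" for s
  have gcc: "continuous_on UNIV gc" unfolding gc_def
    by (rule continuous_on_compose2[OF g clc]) (use clA in auto)
  have gcm[measurable]: "gc \<in> borel_measurable borel" by (rule borel_measurable_continuous_onI[OF gcc])
  have gcnn: "0 \<le> gc s" for s using gnn clA unfolding gc_def by auto
  define Bc where "Bc = (\<lambda>(\<omega>, s). B (cl s) \<omega>)"
  have Bcm[measurable]: "Bc \<in> borel_measurable (M \<Otimes>\<^sub>M lborel)"
    unfolding Bc_def by (rule joint_meas[OF Bm cont clm clnn])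
  define F where "F = (\<lambda>x. indicator A (snd x) * gc (snd x) * exp (l * (Bc x - B t (fst x))))"
  have Fm[measurable]: "F \<in> borel_measurable (M \<Otimes>\<^sub>M lborel)"
    unfolding F_def A_def by measurable
  have Fnn: "0 \<le> F x" for x unfolding F_def using gcnn by simp
  have Fs: "F (\<omega>, s) = indicator A s * (g s * exp (l * (B s \<omega> - B t \<omega>)))" for \<omega> s
    unfolding F_def Bc_def gc_def A_def by (auto simp: clid split: split_indicator)
  have Fint: "integrable lborel (\<lambda>s. F (\<omega>, s))" if \<omega>: "\<omega> \<in> space M" for \<omega>
  proof -
    have "continuous_on {t..T} (\<lambda>s. B s \<omega>)"
      by (rule continuous_on_subset[OF cont[OF \<omega>]]) (use t in auto)
    then have "continuous_on {t..T} (\<lambda>s. g s * exp (l * (B s \<omega> - B t \<omega>)))"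
      by (intro continuous_intros g)
    then have "set_integrable lborel {t..T} (\<lambda>s. g s * exp (l * (B s \<omega> - B t \<omega>)))"
      by (rule borel_integrable_atLeastAtMost')
    then show ?thesis unfolding set_integrable_def Fs A_def by simp
  qed
  have eq1: "(LINT s:{t..T}|lborel. g s * exp (l * (B s \<omega> - B t \<omega>))) = (\<integral>s. F (\<omega>, s) \<partial>lborel)" for \<omega>
    unfolding set_lebesgue_integral_def Fs A_def by simp
  have nonneg: "0 \<le> (LINT s:{t..T}|lborel. g s * exp (l^2 * (s - t) / 2))"
    unfolding set_lebesgue_integral_def
    by (rule Bochner_Integration.integral_nonneg) (use gnn in \<open>auto split: split_indicator\<close>)
  have Im: "(\<lambda>\<omega>. \<integral>s. F (\<omega>, s) \<partial>lborel) \<in> borel_measurable M"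
    by (rule lborel.borel_measurable_lebesgue_integral) (simp add: Fm)
  have "(\<integral>\<omega>. (LINT s:{t..T}|lborel. g s * exp (l * (B s \<omega> - B t \<omega>))) \<partial>M)
        = (\<integral>\<omega>. (\<integral>s. F (\<omega>, s) \<partial>lborel) \<partial>M)" by (simp add: eq1)
  also have "\<dots> = enn2real (\<integral>\<^sup>+\<omega>. ennreal (\<integral>s. F (\<omega>, s) \<partial>lborel) \<partial>M)"
    by (rule integral_eq_nn_integral[OF Im]) (simp add: Fnn)
  also have "(\<integral>\<^sup>+\<omega>. ennreal (\<integral>s. F (\<omega>, s) \<partial>lborel) \<partial>M) = (\<integral>\<^sup>+\<omega>. (\<integral>\<^sup>+s. ennreal (F (\<omega>, s)) \<partial>lborel) \<partial>M)"
    by (intro nn_integral_cong nn_integral_eq_integral[symmetric] Fint) (simp_all add: Fnn)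
  also have "\<dots> = (\<integral>\<^sup>+s. (\<integral>\<^sup>+\<omega>. ennreal (F (\<omega>, s)) \<partial>M) \<partial>lborel)"
    by (rule P.Fubini'[symmetric]) simp
  also have "\<dots> = (\<integral>\<^sup>+s. ennreal (indicator A s * (g s * exp (l^2 * (s - t) / 2))) \<partial>lborel)"
  proof (intro nn_integral_cong)
    fix s :: real
    show "(\<integral>\<^sup>+\<omega>. ennreal (F (\<omega>, s)) \<partial>M) = ennreal (indicator A s * (g s * exp (l^2 * (s - t) / 2)))"
    proof (cases "s \<in> A")
      case True
      then have "(\<integral>\<^sup>+\<omega>. ennreal (F (\<omega>, s)) \<partial>M) = (\<integral>\<^sup>+\<omega>. ennreal (g s) * ennreal (exp (l * (B s \<omega> - B t \<omega>))) \<partial>M)"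
        using gnn by (intro nn_integral_cong) (simp add: Fs ennreal_mult A_def)
      also have "\<dots> = ennreal (g s) * (\<integral>\<^sup>+\<omega>. ennreal (exp (l * (B s \<omega> - B t \<omega>))) \<partial>M)"
        by (rule nn_integral_cmult) simp
      also have "\<dots> = ennreal (g s) * ennreal (exp (l^2 * (s - t) / 2))"
        using True t by (subst gauss_mgf[OF BM]) (auto simp: A_def)
      finally show ?thesis using True gnn by (simp add: ennreal_mult A_def)
    next
      case False
      then show ?thesis by (simp add: Fs)
    qed
  qed
  also have "\<dots> = ennreal (\<integral>s. indicator A s * (g s * exp (l^2 * (s - t) / 2)) \<partial>lborel)"
  proof (rule nn_integral_eq_integral)
    have "continuous_on {t..T} (\<lambda>s. g s * exp (l^2 * (s - t) / 2))"
      by (intro continuous_intros g) auto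
    then have "set_integrable lborel {t..T} (\<lambda>s. g s * exp (l^2 * (s - t) / 2))"
      by (rule borel_integrable_atLeastAtMost')
    then show "integrable lborel (\<lambda>s. indicator A s * (g s * exp (l^2 * (s - t) / 2)))"
      unfolding set_integrable_def A_def by simp
  qed (use gnn in \<open>auto simp: A_def split: split_indicator\<close>)
  also have "(\<integral>s. indicator A s * (g s * exp (l^2 * (s - t) / 2)) \<partial>lborel) = (LINT s:{t..T}|lborel. g s * exp (l^2 * (s - t) / 2))"
    unfolding set_lebesgue_integral_def A_def by simp
  finally show ?thesis using nonneg by simp
qed




lemma int_rescale:
  fixes f :: "real \<Rightarrow> real"
  assumes fc: "continuous_on {a..s} f" and as: "a \<le> s"
  shows "integral {a..s} f = (s - a) * integral {0..1} (\<lambda>v. f (a + (s - a) * v))"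
proof (cases "s = a")
  case True then show ?thesis by simp
next
  case False
  with as have m: "s - a > 0" by simp
  have "(f has_integral integral {a..s} f) (cbox a s)"
    using integrable_continuous_interval[OF fc] by (simp add: has_integral_integral)
  from has_integral_affinity'[OF this m, of a]
  have "((\<lambda>v. f ((s - a) * v + a)) has_integral integral {a..s} f / (s - a)) (cbox 0 1)"
    using m by (simp add: divide_inverse mult.commute)
  then have "integral {0..1} (\<lambda>v. f (a + (s - a) * v)) = integral {a..s} f / (s - a)"
    by (simp add: integral_unique add.commute)
  then show ?thesis using m by simp
qed

lemma param_int_cont:
  fixes f :: "'a::topological_space \<Rightarrow> real \<Rightarrow> real"
  assumes fc: "continuous_on (U \<times> {a..b}) (\<lambda>(x, u). f x u)"
  shows "continuous_on (U \<times> {a..b}) (\<lambda>(x, s). integral {a..s} (f x))"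
proof -
  have fxc: "continuous_on {a..s} (f x)" if "x \<in> U" "s \<le> b" for x s
  proof -
    have "continuous_on {a..s} (\<lambda>u. (\<lambda>(x, u). f x u) (x, u))"
      by (rule continuous_on_compose2[OF fc]) (use that in \<open>auto intro!: continuous_intros\<close>)
    then show ?thesis by simp
  qed
  have eq: "\<And>x s. x \<in> U \<Longrightarrow> s \<in> {a..b} \<Longrightarrow> integral {a..s} (f x) = (s - a) * integral (cbox 0 1) (\<lambda>v. f x (a + (s - a) * v))"
    using int_rescale[OF fxc] by auto
  have c2: "continuous_on ((U \<times> {a..b}) \<times> cbox 0 1) (\<lambda>((x, s), v). f x (a + (s - a) * v))"
  proof -
    define g where "g = (\<lambda>y::('a \<times> real) \<times> real. (fst (fst y), a + (snd (fst y) - a) * snd y))"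
    have gc: "continuous_on ((U \<times> {a..b}) \<times> cbox 0 1) g"
      unfolding g_def by (intro continuous_intros)
    have gi: "g ` ((U \<times> {a..b}) \<times> cbox 0 1) \<subseteq> U \<times> {a..b}"
    proof (rule image_subsetI)
      fix y :: "('a \<times> real) \<times> real" assume "y \<in> (U \<times> {a..b}) \<times> cbox 0 1"
      then obtain x s v where y: "y = ((x, s), v)" "x \<in> U" "a \<le> s" "s \<le> b" "0 \<le> v" "v \<le> 1"
        by (cases y) auto
      moreover have "(s - a) * v \<le> (s - a) * 1" using y by (intro mult_left_mono) auto
      moreover have "0 \<le> (s - a) * v" using y by simp
      ultimately show "g y \<in> U \<times> {a..b}" by (simp add: g_def)
    qed
    have "continuous_on ((U \<times> {a..b}) \<times> cbox 0 1) (\<lambda>y. (\<lambda>(x, u). f x u) (g y))"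
      by (rule continuous_on_compose2[OF fc gc gi])
    then show ?thesis by (simp add: case_prod_beta g_def)
  qed
  have "continuous_on (U \<times> {a..b}) (\<lambda>y. (snd y - a) * integral (cbox 0 1) ((\<lambda>y v. f (fst y) (a + (snd y - a) * v)) y))"
  proof (rule continuous_on_mult)
    show "continuous_on (U \<times> {a..b}) (\<lambda>y. snd y - a)" by (intro continuous_intros)
    have "continuous_on ((U \<times> {a..b}) \<times> cbox 0 1) (\<lambda>(y, v). f (fst y) (a + (snd y - a) * v))"
      using c2 by (simp add: case_prod_beta)
    then show "continuous_on (U \<times> {a..b}) (\<lambda>y. integral (cbox 0 1) ((\<lambda>y v. f (fst y) (a + (snd y - a) * v)) y))"
      by (rule integral_continuous_on_param)
  qed
  then have "continuous_on (U \<times> {a..b}) (\<lambda>(x, s). (s - a) * integral (cbox 0 1) (\<lambda>v. f x (a + (s - a) * v)))"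
    by (simp add: case_prod_beta)
  then show ?thesis by (rule continuous_on_eq) (auto simp: eq)
qed




lemma cont_slice:
  fixes f :: "'a::topological_space \<Rightarrow> 'b::topological_space \<Rightarrow> 'c::topological_space"
  assumes "continuous_on (U \<times> S) (\<lambda>(x, u). f x u)" "x \<in> U"
  shows "continuous_on S (f x)"
proof -
  have "continuous_on S (\<lambda>u. (\<lambda>(x, u). f x u) (x, u))"
    by (rule continuous_on_compose2[OF assms(1)]) (use assms(2) in \<open>auto intro!: continuous_intros\<close>)
  then show ?thesis by simp
qed

locale anl =
  fixes \<delta> fI m0 m1 \<kappa> q c t T :: real
  assumes \<delta>: "\<delta> > 0" and fI: "fI > 0" and m0: "m0 \<ge> 0" and m1: "m1 \<ge> 0" and \<kappa>: "\<kappa> > 0"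
    and q: "q > 0" and t0: "0 \<le> t" and tT: "t \<le> T"
begin

abbreviation HH where "HH h s \<equiv> H2 \<delta> fI t h s"
definition Mf where "Mf h u = MH2 m0 m1 \<kappa> \<delta> fI t h u"
definition dMf where "dMf h u = - (m1 * \<kappa> * HH h u powr (-\<kappa>-1) * exp (-\<delta>*(u-t)))"
definition Phi where "Phi h s = integral {t..s} (Mf h)"
definition dPhi where "dPhi h s = integral {t..s} (dMf h)"
definition gg where "gg h s = HH h s * exp (c*(s-t) - q * Phi h s)"
definition dg where "dg h s = (exp (-\<delta>*(s-t)) - q * HH h s * dPhi h s) * exp (c*(s-t) - q * Phi h s)"
definition G where "G h = integral {t..T} (gg h)"
definition dG where "dG h = integral {t..T} (dg h)"

lemma e_bounds: "t \<le> s \<Longrightarrow> 0 < exp (-\<delta>*(s-t)) \<and> exp (-\<delta>*(s-t)) \<le> 1"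
  using \<delta> by (simp add: mult_nonneg_nonneg)

lemma H_lower: "h > 0 \<Longrightarrow> t \<le> s \<Longrightarrow> h * exp (-\<delta>*(s-t)) \<le> HH h s"
  using e_bounds[of s] \<delta> fI unfolding H2_def by (simp add: mult_nonneg_nonneg)

lemma H_pos: "h > 0 \<Longrightarrow> t \<le> s \<Longrightarrow> HH h s > 0"
  using H_lower[of h s] e_bounds[of s] by (smt (verit) mult_pos_pos)

lemma H_upper: "h > 0 \<Longrightarrow> t \<le> s \<Longrightarrow> HH h s \<le> h + fI/\<delta>"
proof -
  assume h: "h > 0" and s: "t \<le> s"
  have e: "0 < exp (-\<delta>*(s-t))" "exp (-\<delta>*(s-t)) \<le> 1" using e_bounds[OF s] by auto
  have "h * exp (-\<delta>*(s-t)) \<le> h" using h e by (simp add: mult_left_le)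
  moreover have "fI/\<delta> * (1 - exp (-\<delta>*(s-t))) \<le> fI/\<delta>"
    by (rule mult_left_le) (use e fI \<delta> in auto)
  ultimately show ?thesis unfolding H2_def by linarith
qed

lemma H_deriv: "((\<lambda>h. HH h s) has_field_derivative exp (-\<delta>*(s-t))) (at h within U)"
  unfolding H2_def by (auto intro!: derivative_eq_intros)

lemma H_cont: "continuous_on S (\<lambda>(h, s). HH h s)"
  unfolding H2_def case_prod_beta by (intro continuous_intros)

lemma Mf_deriv:
  assumes "h > 0" "t \<le> u"
  shows "((\<lambda>h. Mf h u) has_field_derivative dMf h u) (at h within U)"
proof -
  have Hp: "HH h u > 0" using H_pos assms by simp
  have d: "((\<lambda>h. HH h u) has_real_derivative exp (-\<delta>*(u-t))) (at h)" using H_deriv by blast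
  have "((\<lambda>h. HH h u powr (-\<kappa>)) has_real_derivative
          ((-\<kappa>) * HH h u powr (-\<kappa> - 1) * exp (-\<delta>*(u-t)))) (at h)"
    by (rule DERIV_chain2[OF has_real_derivative_powr[OF Hp] d])
  then have "((\<lambda>h. m0 + m1 * HH h u powr (-\<kappa>)) has_real_derivative
          0 + m1 * ((-\<kappa>) * HH h u powr (-\<kappa> - 1) * exp (-\<delta>*(u-t)))) (at h)"
    by (intro DERIV_add DERIV_const DERIV_cmult)
  then have "((\<lambda>h. Mf h u) has_real_derivative dMf h u) (at h)"
    unfolding Mf_def MH2_def dMf_def by (simp add: algebra_simps)
  then show ?thesis by (rule has_field_derivative_at_within)
qed

lemma Hne: "HH x y = 0 \<Longrightarrow> 0 < a \<Longrightarrow> a \<le> x \<Longrightarrow> t \<le> y \<Longrightarrow> False"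
  using H_pos[of x y] by simp

lemma Mf_cont: "0 < a \<Longrightarrow> continuous_on ({a..b} \<times> {t..T}) (\<lambda>(h, u). Mf h u)"
  unfolding Mf_def MH2_def case_prod_beta
  by (intro continuous_intros continuous_on_powr H_cont[unfolded case_prod_beta])
     (auto dest!: Hne simp del: H2_def)

lemma dMf_cont: "0 < a \<Longrightarrow> continuous_on ({a..b} \<times> {t..T}) (\<lambda>(h, u). dMf h u)"
  unfolding dMf_def case_prod_beta
  by (intro continuous_intros continuous_on_powr H_cont[unfolded case_prod_beta])
     (auto dest!: Hne simp del: H2_def)

lemma Mf_slice: "0 < a \<Longrightarrow> h \<in> {a..b} \<Longrightarrow> continuous_on {t..T} (Mf h)"
  by (rule cont_slice[OF Mf_cont])

lemma dMf_slice: "0 < a \<Longrightarrow> h \<in> {a..b} \<Longrightarrow> continuous_on {t..T} (dMf h)"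
  by (rule cont_slice[OF dMf_cont])

lemma Phi_deriv:
  assumes a: "0 < a" and h: "h \<in> {a..b}" and s: "t \<le> s" "s \<le> T"
  shows "((\<lambda>h. Phi h s) has_field_derivative dPhi h s) (at h within {a..b})"
proof -
  have "((\<lambda>x. integral (cbox t s) (Mf x)) has_field_derivative integral (cbox t s) (dMf h)) (at h within {a..b})"
  proof (rule leibniz_rule_field_derivative)
    fix x u assume x: "x \<in> {a..b}" and u: "u \<in> cbox t s"
    show "((\<lambda>x. Mf x u) has_field_derivative dMf x u) (at x within {a..b})"
      by (rule Mf_deriv) (use a x u in auto)
  next
    fix x assume x: "x \<in> {a..b}"
    have "continuous_on {t..s} (Mf x)"
      by (rule continuous_on_subset[OF Mf_slice[OF a x]]) (use s in auto)
    then show "Mf x integrable_on cbox t s" by (simp add: integrable_continuous_interval)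
  next
    show "continuous_on ({a..b} \<times> cbox t s) (\<lambda>(x, u). dMf x u)"
      by (rule continuous_on_subset[OF dMf_cont[OF a]]) (use s in auto)
  qed (use h in auto)
  then show ?thesis unfolding Phi_def dPhi_def by simp
qed

lemma Phi_cont: "0 < a \<Longrightarrow> continuous_on ({a..b} \<times> {t..T}) (\<lambda>x. Phi (fst x) (snd x))"
  unfolding Phi_def using param_int_cont[OF Mf_cont] by (simp add: case_prod_beta)

lemma dPhi_cont: "0 < a \<Longrightarrow> continuous_on ({a..b} \<times> {t..T}) (\<lambda>x. dPhi (fst x) (snd x))"
  unfolding dPhi_def using param_int_cont[OF dMf_cont] by (simp add: case_prod_beta)

lemma H_cont': "continuous_on S (\<lambda>x. HH (fst x) (snd x))"
  using H_cont by (simp add: case_prod_beta)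

lemma gg_cont: "0 < a \<Longrightarrow> continuous_on ({a..b} \<times> {t..T}) (\<lambda>(h, s). gg h s)"
  unfolding gg_def case_prod_beta
  by (intro continuous_on_mult H_cont' continuous_on_exp continuous_on_diff Phi_cont
      continuous_intros)

lemma dg_cont: "0 < a \<Longrightarrow> continuous_on ({a..b} \<times> {t..T}) (\<lambda>(h, s). dg h s)"
  unfolding dg_def case_prod_beta
  by (intro continuous_on_mult H_cont' continuous_on_exp continuous_on_diff Phi_cont
      dPhi_cont continuous_intros)

lemma gg_deriv:
  assumes a: "0 < a" and h: "h \<in> {a..b}" and s: "t \<le> s" "s \<le> T"
  shows "((\<lambda>h. gg h s) has_field_derivative dg h s) (at h within {a..b})"
proof -
  note P = Phi_deriv[OF a h s]
  note Hd = H_deriv[of s h "{a..b}"]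
  have E1: "((\<lambda>h. c*(s-t) - q * Phi h s) has_field_derivative (0 - q * dPhi h s)) (at h within {a..b})"
    by (intro DERIV_diff DERIV_const DERIV_cmult P)
  have E2: "((\<lambda>h. exp (c*(s-t) - q * Phi h s)) has_field_derivative exp (c*(s-t) - q * Phi h s) * (0 - q * dPhi h s)) (at h within {a..b})"
    by (rule DERIV_chain2[OF DERIV_exp E1])
  note DERIV_mult[OF Hd E2]
  then show ?thesis unfolding gg_def dg_def by (simp add: algebra_simps)
qed

lemma G_deriv:
  assumes h: "h > 0"
  shows "(G has_field_derivative dG h) (at h)"
proof -
  have a: "0 < h/2" using h by simp
  have "((\<lambda>x. integral (cbox t T) (gg x)) has_field_derivative integral (cbox t T) (dg h)) (at h within {h/2..2*h})"
  proof (rule leibniz_rule_field_derivative)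
    fix x u assume x: "x \<in> {h/2..2*h}" and u: "u \<in> cbox t T"
    show "((\<lambda>x. gg x u) has_field_derivative dg x u) (at x within {h/2..2*h})"
      by (rule gg_deriv[OF a x]) (use u in auto)
  next
    fix x assume x: "x \<in> {h/2..2*h}"
    have "continuous_on {t..T} (gg x)" by (rule cont_slice[OF gg_cont[OF a] x])
    then show "gg x integrable_on cbox t T" by (simp add: integrable_continuous_interval)
  next
    show "continuous_on ({h/2..2*h} \<times> cbox t T) (\<lambda>(x, u). dg x u)"
      using dg_cont[OF a] by simp
  qed (use h in auto)
  moreover have "h \<in> interior {h/2..2*h}" using h by simp
  ultimately show ?thesis unfolding G_def dG_def
    using at_within_interior by fastforce
qed

end



lemma int_exp:
  fixes k t s :: real
  assumes k: "k \<noteq> 0" and ts: "t \<le> s"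
  shows "integral {t..s} (\<lambda>u. exp (k*(u-t))) = (exp (k*(s-t)) - 1) / k"
proof -
  define F where "F u = exp (k*(u-t)) / k" for u
  have "((\<lambda>u. exp (k*(u-t))) has_integral (F s - F t)) {t..s}"
  proof (rule fundamental_theorem_of_calculus[OF ts])
    fix x assume "x \<in> {t..s}"
    have "(F has_real_derivative exp (k*(x-t))) (at x within {t..s})"
      unfolding F_def using k by (auto intro!: derivative_eq_intros)
    then show "(F has_vector_derivative exp (k*(x-t))) (at x within {t..s})"
      using k by (simp add: has_real_derivative_iff_has_vector_derivative)
  qed
  then show ?thesis by (simp add: integral_unique F_def diff_divide_distrib)
qed

context anl begin

lemma Mf_nonneg: "h > 0 \<Longrightarrow> t \<le> u \<Longrightarrow> 0 \<le> Mf h u"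
  unfolding Mf_def MH2_def using m0 m1 by simp

lemma Phi_nonneg:
  assumes h: "h > 0" and s: "t \<le> s" "s \<le> T"
  shows "0 \<le> Phi h s"
proof -
  have "continuous_on {t..s} (Mf h)"
    by (rule continuous_on_subset[OF Mf_slice[of h h h]]) (use h s in auto)
  then show ?thesis unfolding Phi_def
    by (intro integral_nonneg Mf_nonneg h) (auto simp: integrable_continuous_interval)
qed

lemma dMf_bound:
  assumes h: "h > 0" and u: "t \<le> u"
  shows "0 \<le> - dMf h u \<and> - dMf h u \<le> m1 * \<kappa> * h powr (-\<kappa>-1) * exp (\<delta>*\<kappa>*(u-t))"
proof -
  define e where "e = exp (-\<delta>*(u-t))"
  have e: "0 < e" by (simp add: e_def)
  have he: "0 < h * e" using h e by simp
  have "HH h u powr (-\<kappa>-1) \<le> (h * e) powr (-\<kappa>-1)"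
    by (rule powr_mono2') (use \<kappa> he H_lower[OF h u] in \<open>auto simp: e_def\<close>)
  also have "(h * e) powr (-\<kappa>-1) = h powr (-\<kappa>-1) * exp (-\<delta>*(u-t) * (-\<kappa>-1))"
    using h e by (simp add: powr_mult e_def exp_powr_real)
  finally have "HH h u powr (-\<kappa>-1) * e \<le> h powr (-\<kappa>-1) * exp (-\<delta>*(u-t) * (-\<kappa>-1)) * e"
    using e by (simp add: mult_right_mono)
  also have "\<dots> = h powr (-\<kappa>-1) * exp (\<delta>*\<kappa>*(u-t))"
    unfolding e_def mult.assoc exp_add[symmetric] by (simp add: algebra_simps)
  finally have "m1 * \<kappa> * (HH h u powr (-\<kappa>-1) * e) \<le> m1 * \<kappa> * (h powr (-\<kappa>-1) * exp (\<delta>*\<kappa>*(u-t)))"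
    using m1 \<kappa> by (intro mult_left_mono) auto
  then show ?thesis using m1 \<kappa> e unfolding dMf_def e_def by (simp add: ac_simps)
qed

lemma dPhi_bound:
  assumes h: "h > 0" and s: "t \<le> s" "s \<le> T"
  shows "0 \<le> - dPhi h s \<and> - dPhi h s \<le> m1 * h powr (-\<kappa>-1) * exp (\<delta>*\<kappa>*T) / \<delta>"
proof -
  have ci: "continuous_on {t..s} (dMf h)"
    by (rule continuous_on_subset[OF dMf_slice[of h h h]]) (use h s in auto)
  then have int: "(\<lambda>u. - dMf h u) integrable_on {t..s}"
    by (simp add: integrable_continuous_interval integrable_neg)
  have md: "- dPhi h s = integral {t..s} (\<lambda>u. - dMf h u)" unfolding dPhi_def by (simp add: integral_neg)
  have nn: "0 \<le> - dPhi h s" unfolding md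
    by (rule integral_nonneg[OF int]) (use dMf_bound h in auto)
  define K where "K = m1 * \<kappa> * h powr (-\<kappa>-1)"
  have K: "0 \<le> K" using m1 \<kappa> by (simp add: K_def)
  have "- dPhi h s \<le> integral {t..s} (\<lambda>u. K * exp (\<delta>*\<kappa>*(u-t)))"
    unfolding md
  proof (rule integral_le[OF int])
    show "(\<lambda>u. K * exp (\<delta>*\<kappa>*(u-t))) integrable_on {t..s}"
      by (intro integrable_continuous_interval continuous_intros)
    show "\<And>x. x \<in> {t..s} \<Longrightarrow> - dMf h x \<le> K * exp (\<delta>*\<kappa>*(x-t))"
      using dMf_bound h unfolding K_def by auto
  qed
  also have "\<dots> = K * ((exp (\<delta>*\<kappa>*(s-t)) - 1) / (\<delta>*\<kappa>))"
    using int_exp[of "\<delta>*\<kappa>" t s] \<delta> \<kappa> s by simp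
  also have "\<dots> \<le> K * (exp (\<delta>*\<kappa>*T) / (\<delta>*\<kappa>))"
  proof (rule mult_left_mono[OF _ K])
    have ee: "exp (\<delta>*\<kappa>*(s-t)) \<le> exp (\<delta>*\<kappa>*T)"
      using \<delta> \<kappa> s t0 by (simp add: mult_left_mono)
    show "(exp (\<delta>*\<kappa>*(s-t)) - 1) / (\<delta>*\<kappa>) \<le> exp (\<delta>*\<kappa>*T) / (\<delta>*\<kappa>)"
      by (intro divide_right_mono) (use ee \<delta> \<kappa> in linarith, use \<delta> \<kappa> in simp)
  qed
  also have "\<dots> = m1 * h powr (-\<kappa>-1) * exp (\<delta>*\<kappa>*T) / \<delta>"
    unfolding K_def using \<kappa> by (simp add: field_simps)
  finally show ?thesis using nn by simp
qed

definition Cq where "Cq h = m1 * h powr (-\<kappa>-1) * (h + fI/\<delta>) * q / \<delta> * exp (\<delta>*\<kappa>*T) + 1"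

lemma dg_bounds:
  assumes h: "h > 0" and s: "t \<le> s" "s \<le> T"
  shows "0 < dg h s \<and> dg h s \<le> Cq h * exp (c*(s-t))"
proof -
  define E where "E = exp (c*(s-t) - q * Phi h s)"
  have E: "0 < E" "E \<le> exp (c*(s-t))"
    using Phi_nonneg[OF h s] q by (auto simp: E_def mult_nonneg_nonneg)
  have e: "0 < exp (-\<delta>*(s-t))" "exp (-\<delta>*(s-t)) \<le> 1" using e_bounds[OF s(1)] by auto
  have Hp: "0 < HH h s" "HH h s \<le> h + fI/\<delta>" using H_pos[OF h s(1)] H_upper[OF h s(1)] by auto
  note dP = dPhi_bound[OF h s]
  have t1: "0 \<le> q * HH h s * (- dPhi h s)" using q Hp dP by (intro mult_nonneg_nonneg) auto
  have "q * HH h s * (- dPhi h s) \<le> q * (h + fI/\<delta>) * (m1 * h powr (-\<kappa>-1) * exp (\<delta>*\<kappa>*T) / \<delta>)"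
    using q Hp dP by (intro mult_mono) auto
  also have "\<dots> = Cq h - 1" unfolding Cq_def by (simp add: field_simps)
  finally have t2: "q * HH h s * (- dPhi h s) \<le> Cq h - 1" .
  have br: "0 < exp (-\<delta>*(s-t)) - q * HH h s * dPhi h s"
     "exp (-\<delta>*(s-t)) - q * HH h s * dPhi h s \<le> Cq h"
    using e t1 t2 by linarith+
  have "dg h s = (exp (-\<delta>*(s-t)) - q * HH h s * dPhi h s) * E" unfolding dg_def E_def by simp
  moreover have "(exp (-\<delta>*(s-t)) - q * HH h s * dPhi h s) * E \<le> Cq h * exp (c*(s-t))"
    using br E by (intro mult_mono) auto
  ultimately show ?thesis using br E by simp
qed

lemma dg_int: "h > 0 \<Longrightarrow> (dg h) integrable_on {t..T}"
  using cont_slice[OF dg_cont[of h h]] by (simp add: integrable_continuous_interval)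

lemma dG_bounds:
  assumes h: "h > 0" and cc: "c \<le> c1" "0 < c1"
  shows "0 \<le> dG h \<and> dG h \<le> Cq h * exp (c1*T) / c1"
proof -
  have Cq: "0 \<le> Cq h" using dg_bounds[OF h order.refl tT] by (smt (verit) exp_gt_zero mult_nonpos_nonneg)
  have nn: "0 \<le> dG h" unfolding dG_def
    by (rule integral_nonneg[OF dg_int[OF h]]) (use dg_bounds h in \<open>auto intro: less_imp_le\<close>)
  have "dG h \<le> integral {t..T} (\<lambda>s. Cq h * exp (c1*(s-t)))" unfolding dG_def
  proof (rule integral_le[OF dg_int[OF h]])
    show "(\<lambda>s. Cq h * exp (c1*(s-t))) integrable_on {t..T}"
      by (intro integrable_continuous_interval continuous_intros)
    fix s assume s: "s \<in> {t..T}"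
    have "dg h s \<le> Cq h * exp (c*(s-t))" using dg_bounds[OF h] s by auto
    also have "\<dots> \<le> Cq h * exp (c1*(s-t))"
      using s cc Cq by (intro mult_left_mono) (auto intro!: mult_right_mono)
    finally show "dg h s \<le> Cq h * exp (c1*(s-t))" .
  qed
  also have "\<dots> = Cq h * ((exp (c1*(T-t)) - 1) / c1)"
    using int_exp[of c1 t T] cc tT by simp
  also have "\<dots> \<le> Cq h * (exp (c1*T) / c1)"
  proof (rule mult_left_mono[OF _ Cq])
    have ee: "exp (c1*(T-t)) \<le> exp (c1*T)" using cc t0 by (simp add: mult_left_mono)
    show "(exp (c1*(T-t)) - 1) / c1 \<le> exp (c1*T) / c1"
      by (intro divide_right_mono) (use ee in linarith, use cc in simp)
  qed
  finally show ?thesis using nn by simp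
qed

lemma dG_pos:
  assumes h: "h > 0" and tT': "t < T"
  shows "0 < dG h"
proof -
  have cont: "continuous_on {t..T} (dg h)" using cont_slice[OF dg_cont[of h h]] h by simp
  obtain x where x: "x \<in> {t..T}" and mn: "\<forall>y\<in>{t..T}. dg h x \<le> dg h y"
    using continuous_attains_inf[OF compact_Icc _ cont] tT' by auto
  have m: "0 < dg h x" using dg_bounds[OF h] x by auto
  have "integral {t..T} (\<lambda>s. dg h x) \<le> dG h" unfolding dG_def
    by (rule integral_le[OF _ dg_int[OF h]]) (use mn in auto)
  moreover have "integral {t..T} (\<lambda>s. dg h x) = (T - t) * dg h x" using tT' by simp
  moreover have "0 < (T - t) * dg h x" using m tT' by simp
  ultimately show ?thesis by linarith
qed

end



lemma exponent_eq:
  fixes \<alpha> \<rho> r \<theta> \<Phi> S lz la \<Delta> :: real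
  assumes a: "0 < \<alpha>" "\<alpha> < 1"
  shows "-(\<rho>*S + \<Phi>) + \<alpha>/(\<alpha>-1) * (lz + ((\<rho>-r)*S + \<Phi> - \<theta>\<^sup>2/2*S - \<theta>*\<Delta>) - la)
       = \<alpha>/(\<alpha>-1) * lz + \<alpha>/(1-\<alpha>) * la
         + ((1/2 * (\<alpha> * \<theta> / (1 - \<alpha>))\<^sup>2 + \<alpha> / (1 - \<alpha>) * (r + 1/2 * \<theta>\<^sup>2) - \<rho>/(1-\<alpha>)) * S - 1/(1-\<alpha>) * \<Phi>)
         - (-(\<alpha>/(\<alpha>-1))*\<theta>)\<^sup>2 * S / 2 + (-(\<alpha>/(\<alpha>-1))*\<theta>) * \<Delta>"
proof -
  define p where "p = \<alpha>/(\<alpha>-1)"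
  have n1: "\<alpha> - 1 \<noteq> 0" "1 - \<alpha> \<noteq> 0" using a by auto
  have e1: "\<alpha>/(1-\<alpha>) = -p" unfolding p_def using n1 by (simp add: field_simps)
  have e2: "1/(1-\<alpha>) = 1-p" unfolding p_def using n1 by (simp add: field_simps)
  have e3: "\<alpha>*\<theta>/(1-\<alpha>) = -p*\<theta>" unfolding p_def using n1 by (simp add: field_simps)
  have e4: "\<rho>/(1-\<alpha>) = \<rho>*(1-p)" unfolding p_def using n1 by (simp add: field_simps)
  show ?thesis unfolding p_def[symmetric] e1 e2 e3 e4
    by (simp add: algebra_simps power2_eq_square)
qed

lemma exp5:
  fixes a b c d e k H :: real
  shows "exp a * k * exp b * (H * exp c) * exp (-d) * exp e = k * H * exp (a + b + c - d + e)"
proof -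
  have "exp (a + b + c - d + e) = exp a * exp b * exp c * exp (-d) * exp e"
    unfolding diff_conv_add_uminus exp_add by simp
  then show ?thesis by (simp add: ac_simps)
qed

lemma integrand_eq:
  fixes \<alpha> z \<rho> r \<theta> \<Phi> S H \<Delta> :: real
  assumes a: "0 < \<alpha>" "\<alpha> < 1" and z: "z > 0"
  shows "exp (-(\<rho>*S + \<Phi>)) * u_hat \<alpha> (z * exp ((\<rho>-r)*S + \<Phi> - \<theta>\<^sup>2/2*S - \<theta>*\<Delta>)) H
   = (z powr (\<alpha>/(\<alpha>-1)) * (1-\<alpha>) * \<alpha> powr (\<alpha>/(1-\<alpha>)))
     * (H * exp ((1/2 * (\<alpha> * \<theta> / (1 - \<alpha>))\<^sup>2 + \<alpha> / (1 - \<alpha>) * (r + 1/2 * \<theta>\<^sup>2) - \<rho>/(1-\<alpha>)) * S - 1/(1-\<alpha>) * \<Phi>))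
     * exp (-((-(\<alpha>/(\<alpha>-1))*\<theta>)\<^sup>2 * S / 2)) * exp ((-(\<alpha>/(\<alpha>-1))*\<theta>) * \<Delta>)"
proof -
  define X where "X = (\<rho>-r)*S + \<Phi> - \<theta>\<^sup>2/2*S - \<theta>*\<Delta>"
  have zx: "z * exp X / \<alpha> > 0" using a z by simp
  have l: "ln (z * exp X / \<alpha>) = ln z + X - ln \<alpha>"
    using a z by (simp add: ln_div ln_mult)
  have L: "exp (-(\<rho>*S + \<Phi>)) * u_hat \<alpha> (z * exp X) H
     = (1-\<alpha>) * H * exp (-(\<rho>*S + \<Phi>) + \<alpha>/(\<alpha>-1) * (ln z + X - ln \<alpha>))"
    unfolding u_hat_def powr_def using zx l a z by (simp add: exp_add)
  have R: "(z powr (\<alpha>/(\<alpha>-1)) * (1-\<alpha>) * \<alpha> powr (\<alpha>/(1-\<alpha>)))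
     * (H * exp ((1/2 * (\<alpha> * \<theta> / (1 - \<alpha>))\<^sup>2 + \<alpha> / (1 - \<alpha>) * (r + 1/2 * \<theta>\<^sup>2) - \<rho>/(1-\<alpha>)) * S - 1/(1-\<alpha>) * \<Phi>))
     * exp (-((-(\<alpha>/(\<alpha>-1))*\<theta>)\<^sup>2 * S / 2)) * exp ((-(\<alpha>/(\<alpha>-1))*\<theta>) * \<Delta>)
     = (1-\<alpha>) * H * exp (\<alpha>/(\<alpha>-1) * ln z + \<alpha>/(1-\<alpha>) * ln \<alpha>
         + ((1/2 * (\<alpha> * \<theta> / (1 - \<alpha>))\<^sup>2 + \<alpha> / (1 - \<alpha>) * (r + 1/2 * \<theta>\<^sup>2) - \<rho>/(1-\<alpha>)) * S - 1/(1-\<alpha>) * \<Phi>)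
         - (-(\<alpha>/(\<alpha>-1))*\<theta>)\<^sup>2 * S / 2 + (-(\<alpha>/(\<alpha>-1))*\<theta>) * \<Delta>)"
  proof -
    have zne: "(z = 0) = False" "(\<alpha> = 0) = False" using a z by auto
    show ?thesis by (simp only: powr_def zne if_False exp5)
  qed
  show ?thesis
    unfolding X_def[symmetric] L R unfolding X_def
    by (subst exponent_eq[OF a]) (rule refl)
qed




lemma W_repr:
  fixes M :: "'a measure" and B :: "real \<Rightarrow> 'a \<Rightarrow> real"
    and T r \<rho> m0 m1 \<kappa> \<delta> \<alpha> fI \<theta> t z h :: real
  assumes BM: "std_BM M B" and \<delta>: "\<delta> > 0" and fI: "fI > 0" and m0: "m0 \<ge> 0" and m1: "m1 \<ge> 0"
    and \<kappa>: "\<kappa> > 0" and \<alpha>: "0 < \<alpha>" "\<alpha> < 1" and t: "0 \<le> t" "t \<le> T" and z: "z > 0" and h: "h > 0"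
  shows "W M B T r \<rho> \<theta> m0 m1 \<kappa> \<delta> \<alpha> fI t z h
     = (z powr (\<alpha>/(\<alpha>-1)) * (1-\<alpha>) * \<alpha> powr (\<alpha>/(1-\<alpha>)))
       * anl.G \<delta> fI m0 m1 \<kappa> (1/(1-\<alpha>)) ((1/2 * (\<alpha> * \<theta> / (1 - \<alpha>))\<^sup>2 + \<alpha> / (1 - \<alpha>) * (r + 1/2 * \<theta>\<^sup>2)) - \<rho>/(1-\<alpha>)) t T h"
proof -
  define cc where "cc = (1/2 * (\<alpha> * \<theta> / (1 - \<alpha>))\<^sup>2 + \<alpha> / (1 - \<alpha>) * (r + 1/2 * \<theta>\<^sup>2)) - \<rho>/(1-\<alpha>)"
  interpret A: anl \<delta> fI m0 m1 \<kappa> "1/(1-\<alpha>)" cc t T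
    by unfold_locales (use \<delta> fI m0 m1 \<kappa> \<alpha> t in auto)
  define K0 where "K0 = z powr (\<alpha>/(\<alpha>-1)) * (1-\<alpha>) * \<alpha> powr (\<alpha>/(1-\<alpha>))"
  define l where "l = -(\<alpha>/(\<alpha>-1))*\<theta>"
  define gf where "gf s = K0 * A.gg h s * exp (-(l\<^sup>2 * (s-t) / 2))" for s
  have K0: "0 \<le> K0" unfolding K0_def using \<alpha> by simp
  have Mfe: "A.Mf h = MH2 m0 m1 \<kappa> \<delta> fI t h" by (rule ext) (simp add: A.Mf_def)
  have LM: "(LINT u:{t..s}|lborel. MH2 m0 m1 \<kappa> \<delta> fI t h u) = A.Phi h s"
    and LRM: "(LINT u:{t..s}|lborel. \<rho> + MH2 m0 m1 \<kappa> \<delta> fI t h u) = \<rho> * (s - t) + A.Phi h s"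
    if s: "s \<in> {t..T}" for s
  proof -
    have c: "continuous_on {t..s} (MH2 m0 m1 \<kappa> \<delta> fI t h)"
      unfolding Mfe[symmetric]
      by (rule continuous_on_subset[OF A.Mf_slice[of h h h]]) (use h s in auto)
    have c2: "continuous_on {t..s} (\<lambda>u. \<rho> + MH2 m0 m1 \<kappa> \<delta> fI t h u)"
      by (intro continuous_intros c)
    show "(LINT u:{t..s}|lborel. MH2 m0 m1 \<kappa> \<delta> fI t h u) = A.Phi h s"
      unfolding set_borel_integral_eq_integral(2)[OF borel_integrable_atLeastAtMost'[OF c]]
      unfolding A.Phi_def Mfe ..
    have "(LINT u:{t..s}|lborel. \<rho> + MH2 m0 m1 \<kappa> \<delta> fI t h u) = integral {t..s} (\<lambda>u. \<rho> + MH2 m0 m1 \<kappa> \<delta> fI t h u)"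
      by (rule set_borel_integral_eq_integral(2)[OF borel_integrable_atLeastAtMost'[OF c2]])
    also have "\<dots> = integral {t..s} (\<lambda>u. \<rho>) + integral {t..s} (MH2 m0 m1 \<kappa> \<delta> fI t h)"
      by (rule integral_add) (auto intro: integrable_continuous_interval c)
    also have "\<dots> = \<rho> * (s - t) + A.Phi h s"
      using s by (simp add: A.Phi_def Mfe)
    finally show "(LINT u:{t..s}|lborel. \<rho> + MH2 m0 m1 \<kappa> \<delta> fI t h u) = \<rho> * (s - t) + A.Phi h s" .
  qed
  have pt: "exp (- (LINT u:{t..s}|lborel. \<rho> + MH2 m0 m1 \<kappa> \<delta> fI t h u))
          * u_hat \<alpha> (Z2 B r \<rho> \<theta> m0 m1 \<kappa> \<delta> fI t z h s \<omega>) (H2 \<delta> fI t h s)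
        = gf s * exp (l * (B s \<omega> - B t \<omega>))" if s: "s \<in> {t..T}" for s \<omega>
  proof -
    have "exp (- (LINT u:{t..s}|lborel. \<rho> + MH2 m0 m1 \<kappa> \<delta> fI t h u))
          * u_hat \<alpha> (Z2 B r \<rho> \<theta> m0 m1 \<kappa> \<delta> fI t z h s \<omega>) (H2 \<delta> fI t h s)
        = exp (-(\<rho>*(s-t) + A.Phi h s)) * u_hat \<alpha> (z * exp ((\<rho>-r)*(s-t) + A.Phi h s - \<theta>\<^sup>2/2*(s-t) - \<theta>*(B s \<omega> - B t \<omega>))) (H2 \<delta> fI t h s)"
      unfolding Z2_def LM[OF s] LRM[OF s] ..
    also have "\<dots> = gf s * exp (l * (B s \<omega> - B t \<omega>))"
      unfolding integrand_eq[OF \<alpha> z] gf_def A.gg_def K0_def l_def unfolding cc_def ..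
    finally show ?thesis .
  qed
  have gfc: "continuous_on {t..T} gf"
  proof -
    have "continuous_on {t..T} (A.gg h)" by (rule cont_slice[OF A.gg_cont[of h h]]) (use h in auto)
    then show ?thesis unfolding gf_def by (intro continuous_intros) auto
  qed
  have gfnn: "0 \<le> gf s" if "s \<in> {t..T}" for s
  proof -
    have "0 < A.HH h s" using A.H_pos[OF h] that by simp
    then show ?thesis unfolding gf_def A.gg_def using K0 by (intro mult_nonneg_nonneg) auto
  qed
  have "W M B T r \<rho> \<theta> m0 m1 \<kappa> \<delta> \<alpha> fI t z h
      = (\<integral>\<omega>. (LINT s:{t..T}|lborel. gf s * exp (l * (B s \<omega> - B t \<omega>))) \<partial>M)"
    unfolding W_def
    by (intro Bochner_Integration.integral_cong refl set_lebesgue_integral_cong) (auto simp: pt)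
  also have "\<dots> = (LINT s:{t..T}|lborel. gf s * exp (l^2 * (s - t) / 2))"
    by (rule BM_expect[OF BM t gfc gfnn])
  also have "\<dots> = (LINT s:{t..T}|lborel. K0 * A.gg h s)"
    by (intro set_lebesgue_integral_cong) (auto simp: gf_def mult.assoc exp_add[symmetric])
  also have "\<dots> = K0 * (LINT s:{t..T}|lborel. A.gg h s)"
    by (rule set_integral_mult_right)
  also have "(LINT s:{t..T}|lborel. A.gg h s) = A.G h"
  proof -
    have "continuous_on {t..T} (A.gg h)" by (rule cont_slice[OF A.gg_cont[of h h]]) (use h in auto)
    then show ?thesis unfolding A.G_def
      by (rule set_borel_integral_eq_integral(2)[OF borel_integrable_atLeastAtMost'])
  qed
  finally show ?thesis unfolding K0_def cc_def .
qed


theorem lemmaA1: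
  fixes M :: "'a measure" and B :: "real \<Rightarrow> 'a \<Rightarrow> real"
    and T r \<mu> \<sigma> \<rho> m0 m1 \<kappa> \<delta> \<alpha> I \<theta> :: real and f :: "real \<Rightarrow> real"
  assumes BM: "std_BM M B"
    and T: "T > 0" and r: "r > 0" and \<sigma>: "\<sigma> > 0" and \<rho>: "\<rho> > 0"
    and m0: "m0 \<ge> 0" and m1: "m1 \<ge> 0" and \<kappa>: "\<kappa> > 0" and \<delta>: "\<delta> > 0"
    and \<alpha>: "0 < \<alpha>" "\<alpha> < 1" and I: "I > 0" and fI: "f I > 0"
    and \<theta>: "\<theta> = (\<mu> - r) / \<sigma>"
  defines "Wf \<equiv> W M B T r \<rho> \<theta> m0 m1 \<kappa> \<delta> \<alpha> (f I)"
    and "C0 \<equiv> (\<lambda>h. m1 * h powr (- \<kappa> - 1) * (h + f I / \<delta>) / ((1 - \<alpha>) * \<delta>)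
                  * exp (\<delta> * \<kappa> * T) + 1)"
    and "c1 \<equiv> 1/2 * (\<alpha> * \<theta> / (1 - \<alpha>))\<^sup>2 + \<alpha> / (1 - \<alpha>) * (r + 1/2 * \<theta>\<^sup>2)"
  shows "c1 > 0 \<and>
    (\<forall>t z h. 0 \<le> t \<and> t \<le> T \<and> z > 0 \<and> h > 0 \<longrightarrow>
           (\<exists>D. ((\<lambda>h'. Wf t z h') has_real_derivative D) (at h)
              \<and> 0 \<le> D
              \<and> D \<le> z powr (\<alpha> / (\<alpha> - 1)) * (1 - \<alpha>) * \<alpha> powr (\<alpha> / (1 - \<alpha>)) * C0 h
                     * exp (c1 * T) / c1)) \<and>
    (\<forall>t h. 0 \<le> t \<and> t < T \<and> h > 0 \<longrightarrow>
           ((\<lambda>z. deriv (\<lambda>h'. Wf t z h') h) \<longlongrightarrow> 0) at_top) \<and>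
    (\<forall>t h. 0 \<le> t \<and> t < T \<and> h > 0 \<longrightarrow>
           filterlim (\<lambda>z. deriv (\<lambda>h'. Wf t z h') h) at_top (at_right 0))"
proof -
  define p where "p = \<alpha>/(\<alpha>-1)"
  define cc where "cc = c1 - \<rho>/(1-\<alpha>)"
  have a1: "0 < 1 - \<alpha>" using \<alpha> by simp
  have pneg: "p < 0" unfolding p_def using \<alpha> by (simp add: divide_pos_neg)
  have c1pos: "c1 > 0"
  proof -
    have "0 \<le> 1/2 * (\<alpha> * \<theta> / (1 - \<alpha>))\<^sup>2" by simp
    moreover have "0 < \<alpha> / (1 - \<alpha>) * (r + 1/2 * \<theta>\<^sup>2)"
      using \<alpha> a1 r by (intro mult_pos_pos) (auto intro: add_pos_nonneg)
    ultimately show ?thesis unfolding c1_def by linarith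
  qed
  have ccle: "cc \<le> c1" unfolding cc_def using \<rho> a1 by simp
  define K0 where "K0 z = z powr p * (1-\<alpha>) * \<alpha> powr (\<alpha>/(1-\<alpha>))" for z
  have K0nn: "0 \<le> K0 z" for z unfolding K0_def using a1 by simp
  have repr: "Wf t z h = K0 z * anl.G \<delta> (f I) m0 m1 \<kappa> (1/(1-\<alpha>)) cc t T h"
    if "0 \<le> t" "t \<le> T" "z > 0" "h > 0" for t z h
    unfolding Wf_def K0_def p_def cc_def c1_def
    by (rule W_repr[OF BM \<delta> fI m0 m1 \<kappa> \<alpha> that])
  have loc: "anl \<delta> (f I) m0 m1 \<kappa> (1/(1-\<alpha>)) t T" if "0 \<le> t" "t \<le> T" for t
    by unfold_locales (use \<delta> fI m0 m1 \<kappa> a1 that in auto)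
  have der: "((\<lambda>h'. Wf t z h') has_real_derivative K0 z * anl.dG \<delta> (f I) m0 m1 \<kappa> (1/(1-\<alpha>)) cc t T h) (at h)"
    if t: "0 \<le> t" "t \<le> T" and z: "z > 0" and h: "h > 0" for t z h
  proof -
    interpret A: anl \<delta> "f I" m0 m1 \<kappa> "1/(1-\<alpha>)" cc t T by (rule loc[OF t])
    have "((\<lambda>h'. K0 z * A.G h') has_real_derivative K0 z * A.dG h) (at h)"
      by (rule DERIV_cmult[OF A.G_deriv[OF h]])
    then show ?thesis
      by (rule has_field_derivative_transform_within_open[where S="{0<..}"])
         (use h in \<open>auto simp: repr[OF t z]\<close>)
  qed
  have part2: "\<forall>t z h. 0 \<le> t \<and> t \<le> T \<and> z > 0 \<and> h > 0 \<longrightarrow>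
           (\<exists>D. ((\<lambda>h'. Wf t z h') has_real_derivative D) (at h)
              \<and> 0 \<le> D
              \<and> D \<le> z powr (\<alpha> / (\<alpha> - 1)) * (1 - \<alpha>) * \<alpha> powr (\<alpha> / (1 - \<alpha>)) * C0 h
                     * exp (c1 * T) / c1)"
  proof (intro allI impI)
    fix t z h :: real assume H: "0 \<le> t \<and> t \<le> T \<and> z > 0 \<and> h > 0"
    then have t: "0 \<le> t" "t \<le> T" and z: "z > 0" and h: "h > 0" by auto
    interpret A: anl \<delta> "f I" m0 m1 \<kappa> "1/(1-\<alpha>)" cc t T by (rule loc[OF t])
    note bd = A.dG_bounds[OF h ccle c1pos]
    have Cq: "A.Cq h = C0 h" unfolding A.Cq_def C0_def using a1 \<delta> by (simp add: field_simps)
    have "K0 z * A.dG h \<le> K0 z * (A.Cq h * exp (c1 * T) / c1)"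
      using bd K0nn by (intro mult_left_mono) auto
    also have "\<dots> = z powr (\<alpha> / (\<alpha> - 1)) * (1 - \<alpha>) * \<alpha> powr (\<alpha> / (1 - \<alpha>)) * C0 h * exp (c1 * T) / c1"
      unfolding K0_def p_def Cq by simp
    finally show "\<exists>D. ((\<lambda>h'. Wf t z h') has_real_derivative D) (at h)
              \<and> 0 \<le> D
              \<and> D \<le> z powr (\<alpha> / (\<alpha> - 1)) * (1 - \<alpha>) * \<alpha> powr (\<alpha> / (1 - \<alpha>)) * C0 h
                     * exp (c1 * T) / c1"
      using der[OF t z h] bd K0nn by (intro exI[of _ "K0 z * A.dG h"]) auto
  qed
  have part34: "((\<lambda>z. deriv (\<lambda>h'. Wf t z h') h) \<longlongrightarrow> 0) at_top \<and>
           filterlim (\<lambda>z. deriv (\<lambda>h'. Wf t z h') h) at_top (at_right 0)"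
    if H: "0 \<le> t \<and> t < T \<and> h > 0" for t h
  proof -
    from H have t: "0 \<le> t" "t \<le> T" "t < T" and h: "h > 0" by auto
    interpret A: anl \<delta> "f I" m0 m1 \<kappa> "1/(1-\<alpha>)" cc t T by (rule loc[OF t(1,2)])
    have dpos: "0 < A.dG h" by (rule A.dG_pos[OF h t(3)])
    define C where "C = (1-\<alpha>) * \<alpha> powr (\<alpha>/(1-\<alpha>)) * A.dG h"
    have Cpos: "0 < C" unfolding C_def using a1 \<alpha> dpos by simp
    have dv: "deriv (\<lambda>h'. Wf t z h') h = z powr p * C" if "z > 0" for z
      using DERIV_imp_deriv[OF der[OF t(1,2) that h]] unfolding K0_def C_def by (simp add: ac_simps)
    have ev1: "eventually (\<lambda>z. z powr p * C = deriv (\<lambda>h'. Wf t z h') h) at_top"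
      using eventually_gt_at_top[of 0] by eventually_elim (simp add: dv)
    have ev2: "eventually (\<lambda>z. z powr p * C = deriv (\<lambda>h'. Wf t z h') h) (at_right 0)"
      using eventually_at_right_less[of 0] by eventually_elim (simp add: dv)
    have l1: "((\<lambda>z. z powr p * C) \<longlongrightarrow> 0) at_top"
      by (intro tendsto_mult_left_zero tendsto_neg_powr[OF pneg] filterlim_ident)
    have lnm: "filterlim (\<lambda>z. - ln z) at_top (at_right (0::real))"
      using filterlim_uminus_at_bot[THEN iffD1, OF ln_at_0] .
    have "filterlim (\<lambda>z. (-p) * (- ln z)) at_top (at_right (0::real))"
      by (rule filterlim_tendsto_pos_mult_at_top[OF tendsto_const _ lnm]) (use pneg in simp)
    then have lexp: "filterlim (\<lambda>z. exp ((-p) * (- ln z))) at_top (at_right (0::real))"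
      by (rule filterlim_compose[OF exp_at_top])
    have evp: "eventually (\<lambda>z. exp ((-p) * (- ln z)) = z powr p) (at_right (0::real))"
      using eventually_at_right_less[of 0] by eventually_elim (simp add: powr_def)
    have "filterlim (\<lambda>z. z powr p) at_top (at_right (0::real))"
      by (rule filterlim_cong[OF refl refl evp, THEN iffD1, OF lexp])
    then have l2: "filterlim (\<lambda>z. z powr p * C) at_top (at_right (0::real))"
      by (rule filterlim_at_top_mult_tendsto_pos[OF tendsto_const Cpos])
    have r1: "((\<lambda>z. deriv (\<lambda>h'. Wf t z h') h) \<longlongrightarrow> 0) at_top"
      by (rule tendsto_cong[OF ev1, THEN iffD1, OF l1])
    have r2: "filterlim (\<lambda>z. deriv (\<lambda>h'. Wf t z h') h) at_top (at_right 0)"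
      by (rule filterlim_cong[OF refl refl ev2, THEN iffD1, OF l2])
    show ?thesis using r1 r2 by (rule conjI)
  qed
  show ?thesis using c1pos part2 part34 by blast
qed

end
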